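(* Let $b \ge 1$, $g = 4b^2$, and let $G$ be a gadget of type I or of type II (basic or extended) with designated vertices $p,q$. Then: (1) $G$ contains a $(2,b)$-alternating-path $R_0$ with $s_1(R_0)=t_1(R_0)=p$ and $t_2(R_0)=q$; (2) $\{p,q\}$ is reachable by a directed path inside $G$ from every vertex of $G$.
   Context: Fix an integer $b\ge1$ and set $g:=4b^2$. Each gadget has designated vertices $p,q$ with an arc $(p,q)$. A gadget of type I is a directed cycle of length at least $g$ through the arc $(p,q)$. A basic gadget of type II is a digraph consisting of vertices $p,q,r$ and a directed path $P_1$ from $r$ to $p$ of length at least $2b^2+b-2$ with $q\notin V(P_1)$, such that every vertex of $P_1$ has an arc to $q$. An extended gadget of type II consists of a basic type-II gadget $(p,q,r,P_1)$ together with a directed path $P_2$ of length at least $b$ such that the last vertex of $P_2$ is $r$, $V(P_1)\cap V(P_2)=\{r\}$, $q\notin V(P_2)$, and either there is an arc from the first vertex of $P_2$ to the second vertex of $P_1$, or there is an arc from some vertex of $V(P_1)\setminus\{r\}$ to the first vertex of $P_2$. For integers $a,b\ge1$, an $(a,b)$-alternating-path is an oriented path $R$ consisting of vertices $s_1,\dots,s_a,t_1,\dots,t_a$ and pairwise internally vertex-disjoint directed paths $Q_1,\dots,Q_a,Q'_1,\dots,Q'_{a-1}$, where $Q_i$ goes from $s_i$ to $t_i$ ($1\le i\le a$), $Q'_i$ goes from $s_{i+1}$ to $t_i$ ($1\le i\le a-1$), and $Q_2,\dots,Q_{a-1},Q'_1,\dots,Q'_{a-1}$ each have length at least $b$ ($Q_1$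 or $Q_a$ may have length zero). We write $s_i(R),t_i(R)$ for its vertices. *)

theory Defs
  imports Main
begin

text \<open>Digraphs are given by a vertex set V and an arc set E.
  Directed paths are nonempty lists of distinct vertices; the length of a
  path is the number of its arcs, i.e. length P - 1.\<close>

definition dpath :: "'a set \<Rightarrow> ('a \<times> 'a) set \<Rightarrow> 'a list \<Rightarrow> bool" where
  "dpath V E P \<longleftrightarrow> P \<noteq> [] \<and> distinct P \<and> set P \<subseteq> V \<and>
     (\<forall>i. i + 1 < length P \<longrightarrow> (P ! i, P ! (i + 1)) \<in> E)"

definition path_arcs :: "'a list \<Rightarrow> ('a \<times> 'a) set" where
  "path_arcs P = {(P ! i, P ! (i + 1)) | i. i + 1 < length P}"

definition cycle_arcs :: "'a list \<Rightarrow> ('a \<times> 'a) set" where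
  "cycle_arcs C = insert (last C, hd C) (path_arcs C)"

definition gadget_I :: "nat \<Rightarrow> 'a set \<Rightarrow> ('a \<times> 'a) set \<Rightarrow> 'a \<Rightarrow> 'a \<Rightarrow> bool" where
  "gadget_I b V E p q \<longleftrightarrow> (\<exists>C. distinct C \<and> length C \<ge> 4 * b^2 \<and>
      V = set C \<and> E = cycle_arcs C \<and> (p, q) \<in> E)"

definition gadget_II_basic_with ::
  "nat \<Rightarrow> 'a set \<Rightarrow> ('a \<times> 'a) set \<Rightarrow> 'a \<Rightarrow> 'a \<Rightarrow> 'a \<Rightarrow> 'a list \<Rightarrow> bool" where
  "gadget_II_basic_with b V E p q r P1 \<longleftrightarrow>
     P1 \<noteq> [] \<and> distinct P1 \<and> hd P1 = r \<and> last P1 = p \<and>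
     length P1 - 1 \<ge> 2 * b^2 + b - 2 \<and> q \<notin> set P1 \<and>
     V = insert q (set P1) \<and>
     E = path_arcs P1 \<union> {(v, q) | v. v \<in> set P1}"

definition gadget_II_basic :: "nat \<Rightarrow> 'a set \<Rightarrow> ('a \<times> 'a) set \<Rightarrow> 'a \<Rightarrow> 'a \<Rightarrow> bool" where
  "gadget_II_basic b V E p q \<longleftrightarrow> (\<exists>r P1. gadget_II_basic_with b V E p q r P1)"

definition gadget_II_ext :: "nat \<Rightarrow> 'a set \<Rightarrow> ('a \<times> 'a) set \<Rightarrow> 'a \<Rightarrow> 'a \<Rightarrow> bool" where
  "gadget_II_ext b V E p q \<longleftrightarrow> (\<exists>V0 E0 r P1 P2 F.
     gadget_II_basic_with b V0 E0 p q r P1 \<and>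
     P2 \<noteq> [] \<and> distinct P2 \<and> length P2 - 1 \<ge> b \<and> last P2 = r \<and>
     set P1 \<inter> set P2 = {r} \<and> q \<notin> set P2 \<and>
     F \<noteq> {} \<and>
     F \<subseteq> {(hd P2, P1 ! 1)} \<union> {(v, hd P2) | v. v \<in> set P1 - {r}} \<and>
     V = V0 \<union> set P2 \<and> E = E0 \<union> path_arcs P2 \<union> F)"

text \<open>The underlying oriented
  path is s1 Q1 t1 (Q'1 reversed) s2 Q2 t2 ... t_a; requiring its vertex sequence
  to be distinct expresses that it is an oriented path and that the directed
  paths are pairwise internally vertex-disjoint.\<close>
definition alt_walk :: "nat \<Rightarrow> (nat \<Rightarrow> 'a list) \<Rightarrow> (nat \<Rightarrow> 'a list) \<Rightarrow> 'a list" where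
  "alt_walk a Q Q' = Q 1 @ concat (map (\<lambda>i. tl (rev (Q' i)) @ tl (Q (i + 1))) [1..<a])"

definition alt_path ::
  "'a set \<Rightarrow> ('a \<times> 'a) set \<Rightarrow> nat \<Rightarrow> nat \<Rightarrow> (nat \<Rightarrow> 'a) \<Rightarrow> (nat \<Rightarrow> 'a)
     \<Rightarrow> (nat \<Rightarrow> 'a list) \<Rightarrow> (nat \<Rightarrow> 'a list) \<Rightarrow> bool" where
  "alt_path V E a b s t Q Q' \<longleftrightarrow> a \<ge> 1 \<and> b \<ge> 1 \<and>
     (\<forall>i \<in> {1..a}. dpath V E (Q i) \<and> hd (Q i) = s i \<and> last (Q i) = t i) \<and>
     (\<forall>i \<in> {1..<a}. dpath V E (Q' i) \<and> hd (Q' i) = s (i + 1) \<and> last (Q' i) = t i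
                     \<and> length (Q' i) - 1 \<ge> b) \<and>
     (\<forall>i \<in> {2..<a}. length (Q i) - 1 \<ge> b) \<and>
     distinct (alt_walk a Q Q')"

end

theory Submission
  imports Defs
begin

lemma dpath_alt: "dpath V E P \<longleftrightarrow> P \<noteq> [] \<and> distinct P \<and> set P \<subseteq> V \<and> path_arcs P \<subseteq> E"
  unfolding dpath_def path_arcs_def by blast

lemma path_arcs_Cons: "xs \<noteq> [] \<Longrightarrow> path_arcs (x # xs) = insert (x, hd xs) (path_arcs xs)"
proof -
  assume xs: "xs \<noteq> []"
  show ?thesis
  proof
    show "path_arcs (x # xs) \<subseteq> insert (x, hd xs) (path_arcs xs)"
    proof
      fix a assume "a \<in> path_arcs (x # xs)"
      then obtain i where i: "a = ((x#xs) ! i, (x#xs) ! (i+1))" "i + 1 < length (x#xs)"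
        unfolding path_arcs_def by auto
      show "a \<in> insert (x, hd xs) (path_arcs xs)"
      proof (cases i)
        case 0 then show ?thesis using i xs by (simp add: hd_conv_nth)
      next
        case (Suc k)
        then have "a = (xs ! k, xs ! (k+1))" "k + 1 < length xs" using i by auto
        then show ?thesis unfolding path_arcs_def by blast
      qed
    qed
    show "insert (x, hd xs) (path_arcs xs) \<subseteq> path_arcs (x # xs)"
    proof
      fix a assume "a \<in> insert (x, hd xs) (path_arcs xs)"
      then show "a \<in> path_arcs (x # xs)"
      proof
        assume "a = (x, hd xs)"
        then show ?thesis unfolding path_arcs_def using xs
          by (auto simp: hd_conv_nth intro!: exI[of _ 0])
      next
        assume "a \<in> path_arcs xs"
        then obtain i where "a = (xs ! i, xs ! (i+1))" "i + 1 < length xs"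
          unfolding path_arcs_def by auto
        then show ?thesis unfolding path_arcs_def
          by (auto intro!: exI[of _ "Suc i"])
      qed
    qed
  qed
qed

lemma path_arcs_snoc: "xs \<noteq> [] \<Longrightarrow> path_arcs (xs @ [x]) = insert (last xs, x) (path_arcs xs)"
proof (induction xs)
  case Nil then show ?case by simp
next
  case (Cons y ys)
  show ?case
  proof (cases "ys = []")
    case True
    then show ?thesis using path_arcs_Cons[of "[x]" y]
      by (simp add: path_arcs_def)
  next
    case False
    then show ?thesis using Cons path_arcs_Cons[of "ys @ [x]" y] path_arcs_Cons[of ys y]
      by (auto simp: hd_append)
  qed
qed

lemma cycle_arcs_rotate1: "C \<noteq> [] \<Longrightarrow> cycle_arcs (rotate1 C) = cycle_arcs C"
proof (cases C)
  case Nil assume "C \<noteq> []" then show ?thesis using Nil by simp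
next
  case (Cons x xs)
  show ?thesis
  proof (cases "xs = []")
    case True then show ?thesis using Cons by simp
  next
    case False
    then show ?thesis using Cons path_arcs_snoc[OF False, of x] path_arcs_Cons[OF False, of x]
      unfolding cycle_arcs_def by (auto simp: hd_append)
  qed
qed

lemma cycle_arcs_rotate: "C \<noteq> [] \<Longrightarrow> cycle_arcs (rotate k C) = cycle_arcs C"
proof (induction k)
  case 0 then show ?case by simp
next
  case (Suc k)
  have "rotate (Suc k) C = rotate1 (rotate k C)" by simp
  moreover have "rotate k C \<noteq> []" using Suc.prems by simp
  ultimately show ?case using cycle_arcs_rotate1 Suc by metis
qed

lemma dpath_drop: "dpath V E P \<Longrightarrow> j < length P \<Longrightarrow> dpath V E (drop j P)"
  unfolding dpath_def by (auto dest: in_set_dropD simp: add.commute add.left_commute)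

lemma dpath_mono: "dpath V E P \<Longrightarrow> V \<subseteq> V' \<Longrightarrow> E \<subseteq> E' \<Longrightarrow> dpath V' E' P"
  unfolding dpath_def by blast

lemma dpath_snoc:
  assumes "dpath V E P" "q \<notin> set P" "q \<in> V" "(last P, q) \<in> E"
  shows "dpath V E (P @ [q])"
proof -
  have "P \<noteq> []" using assms(1) unfolding dpath_def by auto
  then have "path_arcs (P @ [q]) = insert (last P, q) (path_arcs P)" by (rule path_arcs_snoc)
  then show ?thesis using assms unfolding dpath_alt by auto
qed

lemma alt2:
  assumes "b \<ge> 1" "dpath V E Q2" "dpath V E R" "hd R = s" "last R = p" "hd Q2 = s" "last Q2 = q"
    "length R - 1 \<ge> b" "distinct (rev R @ tl Q2)"
  shows "\<exists>s t Q Q'. alt_path V E 2 b s t Q Q' \<and> s 1 = p \<and> t 1 = p \<and> t 2 = q"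
proof -
  have R: "R \<noteq> []" using assms(3) unfolding dpath_def by auto
  have pV: "p \<in> V" using assms(3,5) R unfolding dpath_def by auto
  have dp: "dpath V E [p]" using pV unfolding dpath_def by auto
  have rr: "[p] @ tl (rev R) = rev R" using R assms(5)
    by (metis append_Cons append_Nil hd_rev list.collapse rev_is_Nil_conv)
  define S where "S = (\<lambda>i::nat. if i = 1 then p else s)"
  define T where "T = (\<lambda>i::nat. if i = 1 then p else q)"
  define Q where "Q = (\<lambda>i::nat. if i = 1 then [p] else Q2)"
  define Q' where "Q' = (\<lambda>i::nat. R)"
  have w: "alt_walk 2 Q Q' = rev R @ tl Q2"
    unfolding alt_walk_def Q_def Q'_def using rr by (simp add: numeral_2_eq_2)
  have "alt_path V E 2 b S T Q Q'"
    unfolding alt_path_def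
  proof (intro conjI)
    show "\<forall>i\<in>{1..2}. dpath V E (Q i) \<and> hd (Q i) = S i \<and> last (Q i) = T i"
      using dp assms unfolding Q_def S_def T_def by auto
    show "\<forall>i\<in>{1..<2}. dpath V E (Q' i) \<and> hd (Q' i) = S (i + 1) \<and> last (Q' i) = T i \<and> b \<le> length (Q' i) - 1"
      using assms unfolding Q'_def S_def T_def by auto
    show "distinct (alt_walk 2 Q Q')" using w assms by simp
  qed (use assms in auto)
  then show ?thesis unfolding S_def T_def by fastforce
qed

lemma basic_part:
  assumes b: "b \<ge> 1" and g: "gadget_II_basic_with b V E p q r P1"
  shows "(\<exists>s t Q Q'. alt_path V E 2 b s t Q Q' \<and> s 1 = p \<and> t 1 = p \<and> t 2 = q)
       \<and> (\<forall>v \<in> V. \<exists>w \<in> {p, q}. \<exists>P. dpath V E P \<and> hd P = v \<and> last P = w)"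
proof -
  have P1: "P1 \<noteq> []" "distinct P1" "last P1 = p" "length P1 - 1 \<ge> 2 * b^2 + b - 2"
    "q \<notin> set P1" "V = insert q (set P1)" "E = path_arcs P1 \<union> {(v, q) | v. v \<in> set P1}"
    using g unfolding gadget_II_basic_with_def by auto
  have "b^2 \<ge> 1" using b by simp
  then have len: "length P1 - 1 \<ge> b" using P1(4) by linarith
  have dP1: "dpath V E P1" using P1 unfolding dpath_alt by auto
  define k where "k = length P1 - 1 - b"
  have k: "k < length P1" unfolding k_def using P1(1) by (cases P1) auto
  define R where "R = drop k P1"
  have dR: "dpath V E R" unfolding R_def using dpath_drop[OF dP1 k] .
  have Rne: "R \<noteq> []" using dR unfolding dpath_def by auto
  have lR: "last R = p" unfolding R_def using k P1 by simp
  have lenR: "length R - 1 \<ge> b" unfolding R_def k_def using len by simp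
  have sP: "hd R \<in> set P1" using Rne unfolding R_def by (metis hd_in_set in_set_dropD)
  have dQ2: "dpath V E [hd R, q]"
    using P1 sP unfolding dpath_def by auto
  have dist: "distinct (rev R @ tl [hd R, q])"
    using P1 R_def by (auto dest: in_set_dropD)
  have part1: "\<exists>s t Q Q'. alt_path V E 2 b s t Q Q' \<and> s 1 = p \<and> t 1 = p \<and> t 2 = q"
    by (rule alt2[OF b dQ2 dR refl lR]) (use lenR dist in auto)
  have part2: "\<forall>v \<in> V. \<exists>w \<in> {p, q}. \<exists>P. dpath V E P \<and> hd P = v \<and> last P = w"
  proof
    fix v assume v: "v \<in> V"
    show "\<exists>w \<in> {p, q}. \<exists>P. dpath V E P \<and> hd P = v \<and> last P = w"
    proof (cases "v = q")
      case True
      then show ?thesis using v unfolding dpath_def by (intro bexI[of _ q] exI[of _ "[q]"]) auto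
    next
      case False
      then have "v \<in> set P1" using v P1 by auto
      then have "dpath V E [v, q]" using P1 unfolding dpath_def by auto
      then show ?thesis by auto
    qed
  qed
  show ?thesis using part1 part2 by blast
qed

lemma typeI_part:
  assumes b: "b \<ge> 1" and g: "gadget_I b V E p q"
  shows "(\<exists>s t Q Q'. alt_path V E 2 b s t Q Q' \<and> s 1 = p \<and> t 1 = p \<and> t 2 = q)
       \<and> (\<forall>v \<in> V. \<exists>w \<in> {p, q}. \<exists>P. dpath V E P \<and> hd P = v \<and> last P = w)"
proof -
  obtain C where C: "distinct C" "length C \<ge> 4 * b^2" "V = set C" "E = cycle_arcs C" "(p, q) \<in> E"
    using g unfolding gadget_I_def by blast
  have "b^2 \<ge> 1" using b by simp
  then have "b \<le> b^2" using b by (simp add: power2_eq_square)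
  then have lenC: "length C \<ge> b + 1" using C(2) \<open>b^2 \<ge> 1\<close> by linarith
  have Cne: "C \<noteq> []" using lenC by auto
  obtain C' where C': "distinct C'" "set C' = set C" "cycle_arcs C' = cycle_arcs C" "hd C' = q" "last C' = p"
    "length C' = length C"
  proof (cases "(p, q) = (last C, hd C)")
    case True then show ?thesis using that[of C] C by auto
  next
    case False
    then obtain i where i: "p = C ! i" "q = C ! (i+1)" "i + 1 < length C"
      using C(4,5) unfolding cycle_arcs_def path_arcs_def by auto
    define D where "D = rotate (i+1) C"
    have D: "D = drop (i+1) C @ take (i+1) C" unfolding D_def using i(3) by (simp add: rotate_drop_take)
    have "hd D = q" unfolding D using i Cne by (simp add: hd_append hd_drop_conv_nth)
    moreover have "last D = p"
    proof -
      have "take (i+1) C \<noteq> []" using i Cne by simp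
      then have "last D = last (take (i+1) C)" unfolding D by simp
      also have "\<dots> = take (i+1) C ! i" using i Cne by (simp add: last_conv_nth min_def)
      also have "\<dots> = p" using i by simp
      finally show ?thesis .
    qed
    moreover have "distinct D" "set D = set C" "length D = length C" unfolding D_def using C by auto
    moreover have "cycle_arcs D = cycle_arcs C" unfolding D_def by (rule cycle_arcs_rotate[OF Cne])
    ultimately show ?thesis using that[of D] by blast
  qed
  have C'ne: "C' \<noteq> []" using C' Cne by auto
  have pa: "path_arcs C' \<subseteq> E" using C'(3) C(4) unfolding cycle_arcs_def by blast
  have dC': "dpath V E C'" unfolding dpath_alt using C'ne C'(1,2) C(3) pa by simp
  have qV: "q \<in> V" using C'(4) C'ne C'(2) C(3) by (metis hd_in_set)
  have dQ: "dpath V E [hd C']" using qV C'(4) unfolding dpath_def by simp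
  have part1: "\<exists>s t Q Q'. alt_path V E 2 b s t Q Q' \<and> s 1 = p \<and> t 1 = p \<and> t 2 = q"
  proof (rule alt2[OF b dQ dC' refl C'(5)])
    show "hd [hd C'] = hd C'" by simp
    show "last [hd C'] = q" using C'(4) by simp
    show "b \<le> length C' - 1" using C'(6) lenC by simp
    show "distinct (rev C' @ tl [hd C'])" using C'(1) by simp
  qed
  have part2: "\<forall>v \<in> V. \<exists>w \<in> {p, q}. \<exists>P. dpath V E P \<and> hd P = v \<and> last P = w"
  proof
    fix v assume "v \<in> V"
    then have "v \<in> set C'" using C(3) C'(2) by simp
    then obtain j where j: "j < length C'" "C' ! j = v" by (auto simp: in_set_conv_nth)
    have "dpath V E (drop j C')" using dpath_drop[OF dC' j(1)] .
    moreover have "hd (drop j C') = v" using j by (simp add: hd_drop_conv_nth)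
    moreover have "last (drop j C') = p" using j C'(5) by simp
    ultimately show "\<exists>w \<in> {p, q}. \<exists>P. dpath V E P \<and> hd P = v \<and> last P = w" by blast
  qed
  show ?thesis using part1 part2 by blast
qed

lemma ext_part:
  assumes b: "b \<ge> 1" and g: "gadget_II_ext b V E p q"
  shows "(\<exists>s t Q Q'. alt_path V E 2 b s t Q Q' \<and> s 1 = p \<and> t 1 = p \<and> t 2 = q)
       \<and> (\<forall>v \<in> V. \<exists>w \<in> {p, q}. \<exists>P. dpath V E P \<and> hd P = v \<and> last P = w)"
proof -
  obtain V0 E0 r P1 P2 F where g0: "gadget_II_basic_with b V0 E0 p q r P1"
    and P2: "P2 \<noteq> []" "distinct P2" "last P2 = r" "set P1 \<inter> set P2 = {r}" "q \<notin> set P2"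
    and VE: "V = V0 \<union> set P2" "E = E0 \<union> path_arcs P2 \<union> F"
    using g unfolding gadget_II_ext_def by blast
  have P1: "P1 \<noteq> []" "hd P1 = r" "V0 = insert q (set P1)" "E0 = path_arcs P1 \<union> {(v, q) | v. v \<in> set P1}"
    using g0 unfolding gadget_II_basic_with_def by auto
  have sub: "V0 \<subseteq> V" "E0 \<subseteq> E" using VE by auto
  note bp = basic_part[OF b g0]
  have part1: "\<exists>s t Q Q'. alt_path V E 2 b s t Q Q' \<and> s 1 = p \<and> t 1 = p \<and> t 2 = q"
  proof -
    obtain s t Q Q' where "alt_path V0 E0 2 b s t Q Q'" "s 1 = p" "t 1 = p" "t 2 = q"
      using bp by blast
    moreover have "alt_path V0 E0 2 b s t Q Q' \<Longrightarrow> alt_path V E 2 b s t Q Q'"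
      unfolding alt_path_def using dpath_mono[OF _ sub] by blast
    ultimately show ?thesis by blast
  qed
  have part2: "\<forall>v \<in> V. \<exists>w \<in> {p, q}. \<exists>P. dpath V E P \<and> hd P = v \<and> last P = w"
  proof
    fix v assume v: "v \<in> V"
    show "\<exists>w \<in> {p, q}. \<exists>P. dpath V E P \<and> hd P = v \<and> last P = w"
    proof (cases "v \<in> V0")
      case True
      then obtain w P where "w \<in> {p,q}" "dpath V0 E0 P" "hd P = v" "last P = w" using bp by blast
      then show ?thesis using dpath_mono[OF _ sub] by blast
    next
      case False
      then have "v \<in> set P2" using v VE by auto
      then obtain j where j: "j < length P2" "P2 ! j = v" by (metis in_set_conv_nth)
      have dP2: "dpath V E P2" unfolding dpath_alt using P2 VE by auto
      have d: "dpath V E (drop j P2)" using dpath_drop[OF dP2 j(1)] .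
      have rP1: "r \<in> set P1" using P1 by auto
      have "dpath V E (drop j P2 @ [q])"
      proof (rule dpath_snoc[OF d])
        show "q \<notin> set (drop j P2)" using P2 by (auto dest: in_set_dropD)
        show "q \<in> V" using VE P1 by auto
        show "(last (drop j P2), q) \<in> E" using j P2 VE P1 rP1 by auto
      qed
      moreover have "hd (drop j P2 @ [q]) = v" using j by (simp add: hd_drop_conv_nth)
      ultimately show ?thesis by force
    qed
  qed
  show ?thesis using part1 part2 by blast
qed

theorem lemma2p4:
  fixes b :: nat and V :: "'a set" and E :: "('a \<times> 'a) set" and p q :: 'a
  assumes "b \<ge> 1"
    and "gadget_I b V E p q \<or> gadget_II_basic b V E p q \<or> gadget_II_ext b V E p q"
  shows "(\<exists>s t Q Q'. alt_path V E 2 b s t Q Q' \<and> s 1 = p \<and> t 1 = p \<and> t 2 = q)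
       \<and> (\<forall>v \<in> V. \<exists>w \<in> {p, q}. \<exists>P. dpath V E P \<and> hd P = v \<and> last P = w)"
  using assms(2)
proof (elim disjE)
  assume "gadget_I b V E p q" then show ?thesis by (rule typeI_part[OF assms(1)])
next
  assume "gadget_II_basic b V E p q"
  then obtain r P1 where "gadget_II_basic_with b V E p q r P1" unfolding gadget_II_basic_def by blast
  then show ?thesis by (rule basic_part[OF assms(1)])
next
  assume "gadget_II_ext b V E p q" then show ?thesis by (rule ext_part[OF assms(1)])
qed

end
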